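(* Let $q$ be a prime power and $n=2^v$ with $v\ge0$ and $\gcd(q,n)=1$. The following are equivalent: (i) Type-I duadic splittings of $\mathbb{Z}_{2^v}$ exist; (ii) Type-I duadic splittings of $\mathbb{Z}_{2^v}$ given by some $q$-translation exist; (iii) $0<v<2\,\nu_2(q-1)$. If these hold, there is an integer $u$ with $\max\{0,v-\nu_2(q-1)\}\le u<\min\{v,\nu_2(q-1)\}$, and for such $u$, $\tau_{2^u}$ is a $q$-translation of $\mathbb{Z}_{2^v}$ (i.e. $q2^u\equiv2^u\pmod{2^v}$) and Type-I duadic splittings of $\mathbb{Z}_{2^v}$ given by $\tau_{2^u}$ exist.
   Context: $\mathbb{Z}_n=\mathbb{Z}/n\mathbb{Z}$, $\mathbb{Z}_n^*$ its units. $\mu_q:i\mapsto qi\bmod n$; a subset $P\subseteq\mathbb{Z}_n$ is $\mu_q$-invariant if $\mu_q(P)=P$. For $s\in\mathbb{Z}_n^*$, $t\in\mathbb{Z}_n$ with $qt\equiv t\pmod n$: $\rho_{s,t}:i\mapsto s(i+t)\bmod n$, and $\tau_t=\rho_{1,t}$ is a $q$-translation. Type-I duadic splittings of $\mathbb{Z}_n$ given by $\rho_{s,t}$ exist if there is a $\mu_q$-invariant $P$ with $\mathbb{Z}_n=P\cup\rho_{s,t}(P)$ a disjoint union; Type-I duadic splittings of $\mathbb{Z}_n$ exist if this holds for some such $s,t$. $\nu_2$ is the $2$-adic valuation, $\nu_2(0)=\infty$. *)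

theory Defs
  imports "HOL-Number_Theory.Number_Theory"
begin

text \<open>Z_n is represented by the residues {0..<n} (n > 0); all maps are taken mod n.\<close>

definition mu :: "nat \<Rightarrow> nat \<Rightarrow> nat \<Rightarrow> nat" where
  "mu n q i = (q * i) mod n"

definition mu_invariant :: "nat \<Rightarrow> nat \<Rightarrow> nat set \<Rightarrow> bool" where
  "mu_invariant n q P \<longleftrightarrow> mu n q ` P = P"

definition rho :: "nat \<Rightarrow> nat \<Rightarrow> nat \<Rightarrow> nat \<Rightarrow> nat" where
  "rho n s t i = (s * (i + t)) mod n"

definition admissible :: "nat \<Rightarrow> nat \<Rightarrow> nat \<Rightarrow> nat \<Rightarrow> bool" where
  "admissible n q s t \<longleftrightarrow> s < n \<and> coprime s n \<and> t < n \<and> [q * t = t] (mod n)"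

definition typeI_splitting_given_by :: "nat \<Rightarrow> nat \<Rightarrow> nat \<Rightarrow> nat \<Rightarrow> bool" where
  "typeI_splitting_given_by n q s t \<longleftrightarrow> admissible n q s t \<and>
     (\<exists>P. P \<subseteq> {0..<n} \<and> mu_invariant n q P \<and>
          P \<union> rho n s t ` P = {0..<n} \<and> P \<inter> rho n s t ` P = {})"

definition typeI_splitting_exists :: "nat \<Rightarrow> nat \<Rightarrow> bool" where
  "typeI_splitting_exists n q \<longleftrightarrow> (\<exists>s t. typeI_splitting_given_by n q s t)"

definition typeI_splitting_by_translation :: "nat \<Rightarrow> nat \<Rightarrow> bool" where
  "typeI_splitting_by_translation n q \<longleftrightarrow> (\<exists>t. typeI_splitting_given_by n q 1 t)"

end

theory Submission
  imports Defs
begin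


lemma gcd_pow2:
  fixes c :: int
  assumes "\<not> 2^(k+1) dvd c"
  shows "gcd c (2^v) dvd 2^k"
proof -
  have "gcd c (2^v) dvd (2::int)^v" by simp
  then obtain m where m: "m \<le> v" "normalize (gcd c (2^v)) = (2::int)^m"
    using divides_primepow[of "2::int" "gcd c (2^v)" v] by auto
  hence g: "gcd c (2^v) = 2^m" by simp
  hence "2^m dvd c" by (metis gcd_dvd1)
  have "m \<le> k"
  proof (rule ccontr)
    assume "\<not> m \<le> k"
    hence "(2::int)^(k+1) dvd 2^m" by (intro le_imp_power_dvd) simp
    with \<open>2^m dvd c\<close> assms show False using dvd_trans by blast
  qed
  thus ?thesis using g by (simp add: le_imp_power_dvd)
qed

lemma lin_sol:
  fixes c d N :: int
  assumes "N > 0" "gcd c N dvd d"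
  shows "\<exists>x. 0 \<le> x \<and> x < N \<and> (c*x) mod N = d mod N"
proof -
  obtain u w where uw: "u*c + w*N = gcd c N" using bezout_int by blast
  obtain m where m: "d = gcd c N * m" using assms(2) by blast
  define x where "x = (u*m) mod N"
  have "(c*x) mod N = (c*(u*m)) mod N" unfolding x_def by (simp add: mod_mult_right_eq)
  also have "c*(u*m) = (u*c)*m" by (simp only: ac_simps)
  also have "u*c = gcd c N - w*N" using uw by linarith
  also have "(gcd c N - w*N)*m = d + (-w*m)*N" using m by (simp add: algebra_simps)
  also have "(d + (-w*m)*N) mod N = d mod N" by (rule mod_mult_self1)
  finally show ?thesis using assms(1) unfolding x_def by (intro exI[of _ "(u*m) mod N"]) auto
qed

lemma obstruct:
  fixes r g :: "nat \<Rightarrow> nat"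
  assumes "P \<subseteq> {0..<n}" "P \<union> r ` P = {0..<n}" "P \<inter> r ` P = {}" "inj_on r {0..<n}"
    "\<And>x. x \<in> P \<Longrightarrow> g x \<in> P" "\<And>x. x < n \<Longrightarrow> g x < n"
    "\<And>x. x < n \<Longrightarrow> r (g x) = g (r x)" "i < n" "r i = g i"
  shows False
proof (cases "i \<in> P")
  case True
  hence "g i \<in> P" "g i \<in> r ` P" using assms by (auto intro!: image_eqI[of _ _ i])
  thus False using assms(3) by blast
next
  case False
  hence "i \<in> r ` P" using assms(2,8) by auto
  then obtain p where p: "p \<in> P" "i = r p" by blast
  have pn: "p < n" using p assms(1) by auto
  have "r (g p) = r i" using assms(7)[OF pn] assms(9) p by simp
  hence "g p = i" using assms(4) assms(6)[OF pn] assms(8) by (auto dest: inj_onD)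
  thus False using assms(5)[OF p(1)] False by simp
qed

lemma rho_inj:
  assumes "coprime s n"
  shows "inj_on (rho n s t) {0..<n}"
proof
  fix x y assume xy: "x \<in> {0..<n}" "y \<in> {0..<n}" "rho n s t x = rho n s t y"
  hence "[s*(x+t) = s*(y+t)] (mod n)" unfolding rho_def cong_def by simp
  hence "[x+t = y+t] (mod n)" using assms cong_mult_lcancel_nat by blast
  hence "[x = y] (mod n)" using cong_add_rcancel_nat by blast
  thus "x = y" using xy by (simp add: cong_def)
qed

lemma rho_mu:
  assumes "[q*t = t] (mod n)"
  shows "rho n s t (mu n q x) = mu n q (rho n s t x)"
proof -
  have a: "[(q*x) mod n + t = q*x + q*t] (mod n)"
    by (rule cong_add[OF cong_mod_leftI[OF cong_refl] cong_sym[OF assms]])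
  have b: "[s*((q*x) mod n + t) = s*(q*x+q*t)] (mod n)" by (rule cong_scalar_left[OF a])
  have c: "[q*((s*(x+t)) mod n) = q*(s*(x+t))] (mod n)"
    by (rule cong_scalar_left[OF cong_mod_leftI[OF cong_refl]])
  have d: "s*(q*x+q*t) = q*(s*(x+t))" by (simp add: algebra_simps)
  have "[s*((q*x) mod n + t) = q*((s*(x+t)) mod n)] (mod n)"
    using cong_trans[OF b[unfolded d] cong_sym[OF c]] .
  thus ?thesis unfolding rho_def mu_def cong_def .
qed

lemma bitkeep:
  fixes y u v :: nat
  assumes "u < v"
  shows "even ((y mod 2^v) div 2^u) \<longleftrightarrow> even (y div 2^u)"
proof -
  have pv: "(2::nat)^v = 2^u * 2^(v-u)" using assms by (simp flip: power_add)
  define a where "a = y mod 2^v"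
  define b where "b = y div 2^v"
  have y: "y = a + 2^v * b" unfolding a_def b_def by simp
  hence "y = a + (2^u * 2^(v-u)) * b" by (simp only: pv)
  hence "y = a + 2^u * (2^(v-u) * b)" by (simp only: mult.assoc)
  hence "y div 2^u = a div 2^u + 2^(v-u) * b" by simp
  moreover have "even ((2::nat)^(v-u) * b)" using assms by simp
  ultimately show ?thesis unfolding a_def by simp
qed
lemma suff:
  fixes q v u k :: nat
  assumes "0 < v" "u < v" "u < k" "v \<le> u + k" "2^k dvd (q - 1)" "q \<ge> 1"
  shows "typeI_splitting_given_by (2^v) q 1 (2^u)"
proof -
  define n where "n = (2::nat)^v"
  have npos: "n > 0" unfolding n_def by simp
  obtain c where c: "q = 1 + 2^k * c" using assms(5,6)
    by (metis dvd_def le_add_diff_inverse)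
  have kpos: "k > 0" using assms by simp
  have qodd: "odd q" using c kpos by simp
  have cop: "coprime q n" unfolding n_def using qodd by simp
  have tcong: "[q*2^u = 2^u] (mod n)"
  proof -
    have "q*2^u = 2^u + 2^(k+u)*c" using c by (simp add: algebra_simps power_add)
    moreover have "n dvd 2^(k+u)*c" unfolding n_def
      using assms(4) by (intro dvd_mult2 le_imp_power_dvd) simp
    ultimately show ?thesis unfolding cong_def by (metis mod_add_self2 dvd_def mod_mult_self2 )
  qed
  have un: "(2::nat)^u < n" unfolding n_def using assms(2) by simp
  define P where "P = {i. i < n \<and> even (i div 2^u)}"
  have muP: "mu n q x \<in> P" if "x \<in> P" for x
  proof -
    have "q*x = x + 2^u*(2^(k-u)*c*x)" using c assms(3)
      by (simp add: algebra_simps power_add[symmetric])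
    hence "(q*x) div 2^u = x div 2^u + 2^(k-u)*c*x" by simp
    moreover have "even ((2::nat)^(k-u)*c*x)" using assms(3) by simp
    ultimately have "even ((q*x) div 2^u)" using that unfolding P_def by simp
    thus ?thesis unfolding P_def mu_def n_def using bitkeep[OF assms(2)] by simp
  qed
  have "mu_invariant n q P" unfolding mu_invariant_def
  proof (rule endo_inj_surj)
    show "finite P" unfolding P_def by simp
    show "mu n q ` P \<subseteq> P" using muP by blast
    show "inj_on (mu n q) P"
    proof
      fix x y assume "x \<in> P" "y \<in> P" "mu n q x = mu n q y"
      hence "[q*x = q*y] (mod n)" "x < n" "y < n" unfolding mu_def cong_def P_def by auto
      thus "x = y" using cop cong_mult_lcancel_nat by (simp add: cong_def)
    qed
  qed
  moreover have "P \<union> rho n 1 (2^u) ` P = {0..<n}"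
  proof
    show "P \<union> rho n 1 (2^u) ` P \<subseteq> {0..<n}" unfolding P_def rho_def using npos by auto
    show "{0..<n} \<subseteq> P \<union> rho n 1 (2^u) ` P"
    proof
      fix x assume x: "x \<in> {0..<n}"
      show "x \<in> P \<union> rho n 1 (2^u) ` P"
      proof (cases "x \<in> P")
        case False
        hence xo: "odd (x div 2^u)" using x unfolding P_def by auto
        define y where "y = (x + (n - 2^u)) mod n"
        have nsplit: "n = 2^u * 2^(v-u)" unfolding n_def using assms(2) by (simp add: power_add[symmetric])
        have "(x + (n - 2^u)) + 2^u = x + n" using un by simp
        hence "(x + (n - 2^u)) + 2^u = x + 2^u * 2^(v-u)" using nsplit by simp
        moreover define z where "z = x + (n - 2^u)"
        ultimately have zz: "z + 2^u = x + 2^u * 2^(v-u)" by simp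
        have "(z + 2^u) div 2^u = z div 2^u + 1" by simp
        moreover have "(x + 2^u * 2^(v-u)) div 2^u = x div 2^u + 2^(v-u)" by simp
        ultimately have "z div 2^u + 1 = x div 2^u + 2^(v-u)" using zz by simp
        moreover have "even ((2::nat)^(v-u))" using assms(2) by simp
        ultimately have "even (z div 2^u)" using xo by (metis even_add odd_one)
        hence "even ((x + (n - 2^u)) div 2^u)" unfolding z_def .
        hence yP: "y \<in> P" unfolding P_def y_def n_def using bitkeep[OF assms(2)] npos by simp
        have "rho n 1 (2^u) y = x" unfolding rho_def y_def using x un
          by (simp add: mod_add_left_eq)
        thus ?thesis using yP by blast
      qed simp
    qed
  qed
  moreover have "P \<inter> rho n 1 (2^u) ` P = {}"
  proof -
    have "x \<notin> P" if "y \<in> P" "x = rho n 1 (2^u) y" for x y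
    proof -
      have "(y + 2^u) div 2^u = y div 2^u + 1" by simp
      hence "odd ((y + 2^u) div 2^u)" using that(1) unfolding P_def by simp
      hence "odd (x div 2^u)" using that(2) unfolding rho_def n_def using bitkeep[OF assms(2)] by simp
      thus ?thesis unfolding P_def by simp
    qed
    thus ?thesis by blast
  qed
  moreover have "admissible n q 1 (2^u)" unfolding admissible_def
    using tcong un one_less_power[of "2::nat" v] unfolding n_def using assms(1) by simp
  moreover have "P \<subseteq> {0..<n}" unfolding P_def by auto
  ultimately show ?thesis unfolding typeI_splitting_given_by_def n_def by blast
qed


lemma nec:
  fixes q v s t :: nat
  assumes pp: "primepow q" and cop: "coprime q (2^v)" and sp: "typeI_splitting_given_by (2^v) q s t"
  shows "0 < v \<and> v < 2 * multiplicity 2 (q - 1)"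
proof -
  define n where "n = (2::nat)^v"
  define k where "k = multiplicity 2 (q-1)"
  from sp obtain P where adm: "admissible n q s t" and P: "P \<subseteq> {0..<n}" "mu_invariant n q P"
     "P \<union> rho n s t ` P = {0..<n}" "P \<inter> rho n s t ` P = {}"
    unfolding typeI_splitting_given_by_def n_def by blast
  have sn: "coprime s n" "t < n" "[q*t = t] (mod n)" using adm unfolding admissible_def by auto
  have inj: "inj_on (rho n s t) {0..<n}" by (rule rho_inj[OF sn(1)])
  have npos: "n > 0" unfolding n_def by simp
  have muP: "\<And>x. x \<in> P \<Longrightarrow> mu n q x \<in> P" using P(2) unfolding mu_invariant_def by blast
  have mun: "\<And>x. x < n \<Longrightarrow> mu n q x < n" unfolding mu_def using npos by simp
  have comm: "\<And>x. x < n \<Longrightarrow> rho n s t (mu n q x) = mu n q (rho n s t x)"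
    using rho_mu[OF sn(3)] by blast
  have fix_id: False if "i < n" "rho n s t i = i" for i
    using obstruct[OF P(1) P(3) P(4) inj, of id i] that by simp
  have fix_mu: False if "i < n" "rho n s t i = mu n q i" for i
    using obstruct[OF P(1) P(3) P(4) inj muP mun comm that] .
  have v0: "v > 0"
  proof (rule ccontr)
    assume "\<not> v > 0" hence "n = 1" unfolding n_def by simp
    thus False using fix_id[of 0] by (simp add: rho_def)
  qed
  have "coprime q 2" using cop v0 by (simp add: coprime_power_right_iff)
  hence qodd: "odd q" by simp
  have q2: "q \<ge> 2" using primepow_gt_Suc_0[OF pp] by simp
  hence q3: "q \<ge> 3" using qodd by presburger
  have kdvd: "2^k dvd q - 1" unfolding k_def by (rule multiplicity_dvd)
  have knot: "\<not> 2^(k+1) dvd q - 1"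
  proof
    assume "2^(k+1) dvd q - 1"
    hence "multiplicity 2 (q-1) \<ge> k+1" using q3 by (intro multiplicity_geI) auto
    thus False unfolding k_def by simp
  qed
  have "2^1 dvd q - 1" using qodd q3 by (simp add: dvd_diff_nat)
  hence kpos: "k \<ge> 1" unfolding k_def using q3 by (intro multiplicity_geI) auto
  show ?thesis
  proof (rule ccontr)
    assume "\<not> ?thesis" hence vk: "2*k \<le> v" using v0 unfolding k_def by auto
    obtain c where c: "q - 1 = 2^k * c" using kdvd by blast
    have codd: "odd c"
    proof
      assume "even c"
      then obtain c' where "c = 2*c'" by blast
      hence "q - 1 = 2^(k+1) * c'" using c by simp
      thus False using knot by simp
    qed
    have "q*t \<ge> t" using q2 by simp
    hence "n dvd q*t - t" using sn(3) cong_altdef_nat by blast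
    moreover have "q*t - t = (q-1)*t" by (simp add: diff_mult_distrib)
    ultimately have "2^k * 2^(v-k) dvd 2^k * (c*t)" using c vk unfolding n_def
      by (simp add: power_add[symmetric] mult.assoc)
    hence "2^(v-k) dvd c*t" by simp
    moreover have "coprime ((2::nat)^(v-k)) c" using codd by simp
    ultimately have "2^(v-k) dvd t" using coprime_dvd_mult_right_iff by blast
    moreover have "(2::nat)^k dvd 2^(v-k)" using vk by (intro le_imp_power_dvd) simp
    ultimately have tk: "2^k dvd t" using dvd_trans by blast
    define S where "S = int s"
    define T where "T = int t"
    define Q where "Q = int q"
    define N where "N = int n"
    have TT: "(2::int)^k dvd T" unfolding T_def using tk
      by (metis int_dvd_int_iff of_nat_numeral of_nat_power)
    have Npos: "N > 0" unfolding N_def using npos by simp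
    have N2: "N = 2^v" unfolding N_def n_def by simp
    have sol: "\<exists>x. 0 \<le> x \<and> x < N \<and> [c'*x = -(S*T)] (mod N)" if "\<not> (2::int)^(k+1) dvd c'" for c'
    proof -
      have "gcd c' N dvd 2^k" unfolding N2 by (rule gcd_pow2[OF that])
      hence "gcd c' N dvd -(S*T)" using TT by (meson dvd_trans dvd_mult dvd_minus_iff)
      from lin_sol[OF Npos this] show ?thesis unfolding cong_def by blast
    qed
    show False
    proof (cases "(2::int)^(k+1) dvd S - 1")
      case False
      then obtain x where x: "0 \<le> x" "x < N" "[(S-1)*x = -(S*T)] (mod N)" using sol by blast
      have "[(S-1)*x + (x + S*T) = -(S*T) + (x + S*T)] (mod N)" by (rule cong_add[OF x(3) cong_refl])
      hence "[S*(x+T) = x] (mod N)" by (simp add: algebra_simps)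
      hence e: "(S*(x+T)) mod N = x" using x unfolding cong_def by simp
      define i where "i = nat x"
      have "int (rho n s t i) = (S*(x+T)) mod N" unfolding rho_def i_def S_def T_def N_def
        using x by (simp add: of_nat_mod)
      hence "rho n s t i = i" using e x unfolding i_def by simp
      moreover have "i < n" using x unfolding i_def N_def by simp
      ultimately show False using fix_id by blast
    next
      case True
      have "\<not> (2::int)^(k+1) dvd S - Q"
      proof
        assume "(2::int)^(k+1) dvd S - Q"
        with True have "(2::int)^(k+1) dvd (S - 1) - (S - Q)" by (rule dvd_diff)
        moreover have "(S - 1) - (S - Q) = int (q - 1)" unfolding Q_def using q2 by simp
        ultimately have "int (2^(k+1)) dvd int (q - 1)" by simp
        thus False using knot by (simp only: int_dvd_int_iff)
      qed
      then obtain x where x: "0 \<le> x" "x < N" "[(S-Q)*x = -(S*T)] (mod N)" using sol by blast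
      have "[(S-Q)*x + (Q*x + S*T) = -(S*T) + (Q*x + S*T)] (mod N)" by (rule cong_add[OF x(3) cong_refl])
      hence "[S*(x+T) = Q*x] (mod N)" by (simp add: algebra_simps)
      hence e: "(S*(x+T)) mod N = (Q*x) mod N" unfolding cong_def by simp
      define i where "i = nat x"
      have "int (rho n s t i) = (S*(x+T)) mod N" unfolding rho_def i_def S_def T_def N_def
        using x by (simp add: of_nat_mod)
      moreover have "int (mu n q i) = (Q*x) mod N" unfolding mu_def i_def Q_def N_def
        using x by (simp add: of_nat_mod)
      ultimately have "rho n s t i = mu n q i" using e by simp
      moreover have "i < n" using x unfolding i_def N_def by simp
      ultimately show False using fix_mu by blast
    qed
  qed
qed

theorem theorem3p8:
  fixes q v :: nat
  assumes "primepow q"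
    and "coprime q (2 ^ v)"
  shows "(typeI_splitting_exists (2 ^ v) q \<longleftrightarrow> typeI_splitting_by_translation (2 ^ v) q)
       \<and> (typeI_splitting_by_translation (2 ^ v) q \<longleftrightarrow>
            0 < v \<and> v < 2 * multiplicity 2 (q - 1))
       \<and> (0 < v \<and> v < 2 * multiplicity 2 (q - 1) \<longrightarrow>
            (\<exists>u::nat. max 0 (int v - int (multiplicity 2 (q - 1))) \<le> int u
                       \<and> u < min v (multiplicity 2 (q - 1)))
          \<and> (\<forall>u::nat. max 0 (int v - int (multiplicity 2 (q - 1))) \<le> int u
                       \<and> u < min v (multiplicity 2 (q - 1)) \<longrightarrow>
               [q * 2 ^ u = 2 ^ u] (mod 2 ^ v)
               \<and> typeI_splitting_given_by (2 ^ v) q 1 (2 ^ u)))"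
  proof -
  define k where "k = multiplicity 2 (q - 1)"
  have q2: "q \<ge> 2" using primepow_gt_Suc_0[OF assms(1)] by simp
  have kdvd: "2^k dvd q - 1" unfolding k_def by (rule multiplicity_dvd)
  have S: "typeI_splitting_given_by (2 ^ v) q 1 (2 ^ u)"
    if "0 < v" "v < 2*k" "int v - int k \<le> int u" "u < v" "u < k" for u
    by (rule suff[OF that(1,4,5) _ kdvd]) (use that q2 in auto)
  have C: "0 < v \<and> v < 2*k" if "typeI_splitting_given_by (2^v) q s t" for s t
    using nec[OF assms that] unfolding k_def .
  have E: "typeI_splitting_by_translation (2 ^ v) q" if "0 < v" "v < 2*k"
  proof -
    have "typeI_splitting_given_by (2^v) q 1 (2^(v-k))" using that by (intro S) auto
    thus ?thesis unfolding typeI_splitting_by_translation_def by blast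
  qed
  have part1: "typeI_splitting_exists (2 ^ v) q \<longleftrightarrow> typeI_splitting_by_translation (2 ^ v) q"
  proof
    assume "typeI_splitting_exists (2 ^ v) q"
    then obtain s t where "typeI_splitting_given_by (2^v) q s t"
      unfolding typeI_splitting_exists_def by blast
    from C[OF this] show "typeI_splitting_by_translation (2 ^ v) q" using E by blast
  next
    assume "typeI_splitting_by_translation (2 ^ v) q"
    then obtain t where "typeI_splitting_given_by (2^v) q 1 t"
      unfolding typeI_splitting_by_translation_def by blast
    thus "typeI_splitting_exists (2 ^ v) q" unfolding typeI_splitting_exists_def by blast
  qed
  have part2: "typeI_splitting_by_translation (2 ^ v) q \<longleftrightarrow> 0 < v \<and> v < 2 * k"
  proof
    assume "typeI_splitting_by_translation (2 ^ v) q"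
    then obtain t where "typeI_splitting_given_by (2^v) q 1 t"
      unfolding typeI_splitting_by_translation_def by blast
    from C[OF this] show "0 < v \<and> v < 2 * k" .
  next
    assume "0 < v \<and> v < 2 * k"
    thus "typeI_splitting_by_translation (2 ^ v) q" using E by blast
  qed
  have part3: "(\<exists>u::nat. max 0 (int v - int k) \<le> int u \<and> u < min v k)
          \<and> (\<forall>u::nat. max 0 (int v - int k) \<le> int u \<and> u < min v k \<longrightarrow>
               [q * 2 ^ u = 2 ^ u] (mod 2 ^ v) \<and> typeI_splitting_given_by (2 ^ v) q 1 (2 ^ u))"
    if "0 < v" "v < 2*k"
  proof
    show "\<exists>u::nat. max 0 (int v - int k) \<le> int u \<and> u < min v k"
      using that by (intro exI[of _ "v - k"]) auto
    show "\<forall>u::nat. max 0 (int v - int k) \<le> int u \<and> u < min v k \<longrightarrow>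
               [q * 2 ^ u = 2 ^ u] (mod 2 ^ v) \<and> typeI_splitting_given_by (2 ^ v) q 1 (2 ^ u)"
    proof (intro allI impI)
      fix u :: nat assume u: "max 0 (int v - int k) \<le> int u \<and> u < min v k"
      hence "int v - int k \<le> int u" "u < v" "u < k" by auto
      hence G: "typeI_splitting_given_by (2 ^ v) q 1 (2 ^ u)" by (rule S[OF that])
      thus "[q * 2 ^ u = 2 ^ u] (mod 2 ^ v) \<and> typeI_splitting_given_by (2 ^ v) q 1 (2 ^ u)"
        unfolding typeI_splitting_given_by_def admissible_def by blast
    qed
  qed
  have part3': "0 < v \<and> v < 2 * k \<longrightarrow> (\<exists>u::nat. max 0 (int v - int k) \<le> int u \<and> u < min v k)
          \<and> (\<forall>u::nat. max 0 (int v - int k) \<le> int u \<and> u < min v k \<longrightarrow>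
               [q * 2 ^ u = 2 ^ u] (mod 2 ^ v) \<and> typeI_splitting_given_by (2 ^ v) q 1 (2 ^ u))"
    using part3 by blast
  show ?thesis using part1 part2 part3' unfolding k_def by (intro conjI)
qed

end
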